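(* Let $k\ge 0$ and let $G=F_k$, of order $n=4k+3$. Then (a) $\gamma_t(G)=(n+1)/2$. Moreover, if $k\ge 1$ and $w\in\{v_1,v_2,v_3\}$ (the three subdivision vertices on the path $a_1v_1v_2v_3c_1$), then (b) $\gamma_t(G-w)=(n-1)/2$ and (c) $\gamma_t^a(G;w)=(n-1)/2$.
   Context: For a graph $G$ with no isolated vertex, a total dominating set (TD-set) is a set $S\subseteq V(G)$ such that every vertex of $G$ is adjacent to some vertex of $S$; $\gamma_t(G)$ is the minimum cardinality of a TD-set. For a vertex $v$ of $G$, an almost total dominating set (ATD-set) of $G$ with respect to $v$ is a set $S\subseteq V(G)$ with $v\in S$ such that every vertex different from $v$ is adjacent to a vertex of $S$ and $v$ has no neighbor in $S$; $\gamma_t^a(G;v)$ is its minimum cardinality. For $k\ge 1$, $G_k$ is the graph with vertex set $\{a_i,b_i,c_i,d_i:1\le i\le k\}$ whose edges are: the edges of the path $a_1b_1a_2b_2\cdots a_kb_k$, the edges of the path $c_1d_1c_2d_2\cdots c_kd_k$, the edges $a_id_i$ and $b_ic_i$ for every $1\le i\le k$, and the two edges $a_1c_1$ and $b_kd_k$. $F_0=C_3$, and for $k\ge1$, $F_k$ is obtained from $G_k$ by replacing the edge $a_1c_1$ by a path $a_1v_1v_2v_3c_1$ through three new vertices $v_1,v_2,v_3$. *)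

theory Defs
  imports Complex_Main
begin

text \<open>Simple graphs are given by a vertex set V and a symmetric adjacency predicate E.\<close>

definition is_TDS :: "'a set \<Rightarrow> ('a \<Rightarrow> 'a \<Rightarrow> bool) \<Rightarrow> 'a set \<Rightarrow> bool" where
  "is_TDS V E S \<longleftrightarrow> S \<subseteq> V \<and> (\<forall>x\<in>V. \<exists>u\<in>S. E x u)"

definition gamma_t :: "'a set \<Rightarrow> ('a \<Rightarrow> 'a \<Rightarrow> bool) \<Rightarrow> nat" where
  "gamma_t V E = (LEAST m. \<exists>S. is_TDS V E S \<and> card S = m)"

definition is_ATDS :: "'a set \<Rightarrow> ('a \<Rightarrow> 'a \<Rightarrow> bool) \<Rightarrow> 'a \<Rightarrow> 'a set \<Rightarrow> bool" where
  "is_ATDS V E v S \<longleftrightarrow> S \<subseteq> V \<and> v \<in> S \<and> (\<forall>x\<in>V - {v}. \<exists>u\<in>S. E x u)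
     \<and> \<not> (\<exists>u\<in>S. E v u)"

definition gamma_ta :: "'a set \<Rightarrow> ('a \<Rightarrow> 'a \<Rightarrow> bool) \<Rightarrow> 'a \<Rightarrow> nat" where
  "gamma_ta V E v = (LEAST m. \<exists>S. is_ATDS V E v S \<and> card S = m)"

definition del_vertex_adj :: "'a set \<Rightarrow> ('a \<Rightarrow> 'a \<Rightarrow> bool) \<Rightarrow> 'a \<Rightarrow> 'a \<Rightarrow> 'a \<Rightarrow> bool" where
  "del_vertex_adj V E w x y \<longleftrightarrow> x \<in> V - {w} \<and> y \<in> V - {w} \<and> E x y"

datatype vtx = A nat | B nat | C nat | D nat | Vs nat

text \<open>Edges of G_k (as unordered pairs listed once).\<close>
definition G_edges :: "nat \<Rightarrow> (vtx \<times> vtx) set" where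
  "G_edges k =
     {(A i, B i) | i. 1 \<le> i \<and> i \<le> k} \<union> {(B i, A (i+1)) | i. 1 \<le> i \<and> i < k}
   \<union> {(C i, D i) | i. 1 \<le> i \<and> i \<le> k} \<union> {(D i, C (i+1)) | i. 1 \<le> i \<and> i < k}
   \<union> {(A i, D i) | i. 1 \<le> i \<and> i \<le> k} \<union> {(B i, C i) | i. 1 \<le> i \<and> i \<le> k}
   \<union> {(A 1, C 1), (B k, D k)}"

definition F_verts :: "nat \<Rightarrow> vtx set" where
  "F_verts k = (if k = 0 then {Vs 1, Vs 2, Vs 3}
     else {A i | i. 1 \<le> i \<and> i \<le> k} \<union> {B i | i. 1 \<le> i \<and> i \<le> k}
        \<union> {C i | i. 1 \<le> i \<and> i \<le> k} \<union> {D i | i. 1 \<le> i \<and> i \<le> k}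
        \<union> {Vs 1, Vs 2, Vs 3})"

definition F_edges :: "nat \<Rightarrow> (vtx \<times> vtx) set" where
  "F_edges k = (if k = 0 then {(Vs 1, Vs 2), (Vs 2, Vs 3), (Vs 3, Vs 1)}
     else (G_edges k - {(A 1, C 1)})
        \<union> {(A 1, Vs 1), (Vs 1, Vs 2), (Vs 2, Vs 3), (Vs 3, C 1)})"

definition F_adj :: "nat \<Rightarrow> vtx \<Rightarrow> vtx \<Rightarrow> bool" where
  "F_adj k x y \<longleftrightarrow> (x, y) \<in> F_edges k \<or> (y, x) \<in> F_edges k"

end

theory Submission
  imports Defs
begin

lemma adjA: "1 \<le> k \<Longrightarrow> 1 \<le> i \<Longrightarrow> i \<le> k \<Longrightarrow> F_adj k (A i) y \<Longrightarrow> y = B i \<or> y = D i \<or> y = (if i = 1 then Vs 1 else B (i-1))"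
  by (auto simp: F_adj_def F_edges_def G_edges_def)
lemma adjC: "1 \<le> k \<Longrightarrow> 1 \<le> i \<Longrightarrow> i \<le> k \<Longrightarrow> F_adj k (C i) y \<Longrightarrow> y = B i \<or> y = D i \<or> y = (if i = 1 then Vs 3 else D (i-1))"
  by (auto simp: F_adj_def F_edges_def G_edges_def)
lemma adjB: "1 \<le> k \<Longrightarrow> 1 \<le> i \<Longrightarrow> i \<le> k \<Longrightarrow> F_adj k (B i) y \<Longrightarrow> y = A i \<or> y = C i \<or> y = (if i = k then D k else A (i+1))"
  by (auto simp: F_adj_def F_edges_def G_edges_def)
lemma adjD: "1 \<le> k \<Longrightarrow> 1 \<le> i \<Longrightarrow> i \<le> k \<Longrightarrow> F_adj k (D i) y \<Longrightarrow> y = A i \<or> y = C i \<or> y = (if i = k then B k else C (i+1))"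
  by (auto simp: F_adj_def F_edges_def G_edges_def)
lemma adjV1: "1 \<le> k \<Longrightarrow> F_adj k (Vs 1) y \<longleftrightarrow> y = A 1 \<or> y = Vs 2"
  by (auto simp: F_adj_def F_edges_def G_edges_def)
lemma adjV2: "1 \<le> k \<Longrightarrow> F_adj k (Vs 2) y \<longleftrightarrow> y = Vs 1 \<or> y = Vs 3"
  by (auto simp: F_adj_def F_edges_def G_edges_def)
lemma adjV3: "1 \<le> k \<Longrightarrow> F_adj k (Vs 3) y \<longleftrightarrow> y = C 1 \<or> y = Vs 2"
  by (auto simp: F_adj_def F_edges_def G_edges_def)

lemma fwd:
  fixes x :: "nat \<Rightarrow> nat"
  assumes "l \<le> m" "x l \<ge> 1" "\<And>i. l \<le> i \<Longrightarrow> i < m \<Longrightarrow> x (Suc i) = 0 \<Longrightarrow> x i \<ge> 2"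
  shows "m - l + 1 + (if x m \<ge> 2 then 1 else 0) \<le> (\<Sum>j=l..m. x j)"
  using assms(1)
proof (induction m rule: dec_induct)
  case base
  then show ?case using assms(2) by auto
next
  case (step n)
  have s: "(\<Sum>j=l..Suc n. x j) = (\<Sum>j=l..n. x j) + x (Suc n)"
    using step.hyps by (simp add: sum.cl_ivl_Suc)
  have "x (Suc n) = 0 \<Longrightarrow> x n \<ge> 2" using assms(3) step.hyps by auto
  then show ?case using step.IH step.hyps unfolding s
    by (cases "x (Suc n) = 0"; cases "x (Suc n) \<ge> 2"; cases "x n \<ge> 2"; cases "x m \<ge> 2"; simp)
qed

lemma bwd:
  fixes x :: "nat \<Rightarrow> nat"
  assumes "l \<le> m" "x m \<ge> 1" "\<And>i. l \<le> i \<Longrightarrow> i < m \<Longrightarrow> x i = 0 \<Longrightarrow> x (Suc i) \<ge> 2"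
  shows "m - l + 1 + (if x l \<ge> 2 then 1 else 0) \<le> (\<Sum>j=l..m. x j)"
  using assms(1)
proof (induction l rule: inc_induct)
  case base
  then show ?case using assms(2) by auto
next
  case (step n)
  have s: "(\<Sum>j=n..m. x j) = x n + (\<Sum>j=Suc n..m. x j)"
    using step.hyps by (simp add: sum.atLeast_Suc_atMost)
  have "x n = 0 \<Longrightarrow> x (Suc n) \<ge> 2" using assms(3) step.hyps by auto
  then show ?case using step.IH step.hyps unfolding s
    by (cases "x n = 0"; cases "x (Suc n) \<ge> 2"; cases "x n \<ge> 2"; simp)
qed

definition TB :: "nat \<Rightarrow> vtx set" where
  "TB j = (if j = 0 then {Vs 1, Vs 3} else {B j, D j})"
definition UB :: "nat \<Rightarrow> vtx set" where
  "UB j = (if j = 0 then {Vs 2} else {A j, C j})"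

lemma mem_F:
  assumes "1 \<le> k" "1 \<le> i" "i \<le> k"
  shows "A i \<in> F_verts k" "B i \<in> F_verts k" "C i \<in> F_verts k" "D i \<in> F_verts k"
  using assms by (auto simp: F_verts_def)

lemma memV_F: "1 \<le> k \<Longrightarrow> Vs 1 \<in> F_verts k \<and> Vs 2 \<in> F_verts k \<and> Vs 3 \<in> F_verts k"
  by (auto simp: F_verts_def)

lemma finite_F: "finite (F_verts k)"
proof -
  have "F_verts k \<subseteq> A ` {1..k} \<union> B ` {1..k} \<union> C ` {1..k} \<union> D ` {1..k} \<union> {Vs 1, Vs 2, Vs 3}"
    by (auto simp: F_verts_def)
  then show ?thesis by (rule finite_subset) auto
qed

lemma core:
  assumes k: "1 \<le> k" and SV: "S \<subseteq> F_verts k"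
    and H: "\<And>x. x \<in> F_verts k \<Longrightarrow> x \<notin> {Vs 1, Vs 2, Vs 3} \<Longrightarrow> \<exists>y\<in>S. F_adj k x y"
  shows "2*k + (if card (S \<inter> {Vs 1, Vs 3}) \<ge> 1 then 1 else 0)
     + (if card (S \<inter> {A 1, C 1}) \<ge> 2 then 1 else 0) + card (S \<inter> {Vs 2}) \<le> card S"
proof -
  have fS: "finite S" using SV finite_F finite_subset by blast
  define t where "t j = card (S \<inter> TB j)" for j
  define u where "u j = card (S \<inter> UB j)" for j
  have ft: "finite (S \<inter> X)" for X using fS by simp
  have X: "t i \<ge> 2" if i: "i < k" and t0: "t (Suc i) = 0" for i
  proof -
    have "S \<inter> TB (Suc i) = {}" using t0 ft unfolding t_def by simp
    then have nB: "B (Suc i) \<notin> S" "D (Suc i) \<notin> S" by (auto simp: TB_def)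
    obtain y where y: "y \<in> S" "F_adj k (A (Suc i)) y"
      using H[of "A (Suc i)"] mem_F[of k "Suc i"] k i by auto
    have y1: "y = (if Suc i = 1 then Vs 1 else B (Suc i - 1))"
      using adjA[OF k _ _ y(2)] i nB y(1) by auto
    obtain z where z: "z \<in> S" "F_adj k (C (Suc i)) z"
      using H[of "C (Suc i)"] mem_F[of k "Suc i"] k i by auto
    have z1: "z = (if Suc i = 1 then Vs 3 else D (Suc i - 1))"
      using adjC[OF k _ _ z(2)] i nB z(1) by auto
    have "TB i \<subseteq> S" using y1 z1 y(1) z(1) by (auto simp: TB_def split: if_splits)
    then have "S \<inter> TB i = TB i" by auto
    then show ?thesis unfolding t_def by (simp add: TB_def)
  qed
  have Y: "u (Suc i) \<ge> 2" if i: "1 \<le> i" "i < k" and u0: "u i = 0" for i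
  proof -
    have "S \<inter> UB i = {}" using u0 ft unfolding u_def by simp
    then have nA: "A i \<notin> S" "C i \<notin> S" using i by (auto simp: UB_def)
    obtain y where y: "y \<in> S" "F_adj k (B i) y"
      using H[of "B i"] mem_F[of k i] k i by auto
    have y1: "y = A (Suc i)"
      using adjB[OF k _ _ y(2)] i nA y(1) by auto
    obtain z where z: "z \<in> S" "F_adj k (D i) z"
      using H[of "D i"] mem_F[of k i] k i by auto
    have z1: "z = C (Suc i)"
      using adjD[OF k _ _ z(2)] i nA z(1) by auto
    have "UB (Suc i) \<subseteq> S" using y1 z1 y(1) z(1) by (auto simp: UB_def)
    then have "S \<inter> UB (Suc i) = UB (Suc i)" by auto
    then show ?thesis unfolding u_def by (simp add: UB_def)
  qed
  have Z: "t k \<ge> 2" if u0: "u k = 0"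
  proof -
    have "S \<inter> UB k = {}" using u0 ft unfolding u_def by simp
    then have nA: "A k \<notin> S" "C k \<notin> S" using k by (auto simp: UB_def)
    obtain y where y: "y \<in> S" "F_adj k (B k) y"
      using H[of "B k"] mem_F[of k k] k by auto
    have y1: "y = D k"
      using adjB[OF k _ _ y(2)] k nA y(1) by auto
    obtain z where z: "z \<in> S" "F_adj k (D k) z"
      using H[of "D k"] mem_F[of k k] k by auto
    have z1: "z = B k"
      using adjD[OF k _ _ z(2)] k nA z(1) by auto
    have "TB k \<subseteq> S" using y1 z1 y(1) z(1) k by (auto simp: TB_def)
    then have "S \<inter> TB k = TB k" by auto
    then show ?thesis unfolding t_def using k by (simp add: TB_def)
  qed
  have sumT: "k + (if t k \<ge> 2 then 1 else 0) + (if t 0 \<ge> 1 then 1 else 0) \<le> (\<Sum>j=0..k. t j)"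
  proof (cases "t 0 \<ge> 1")
    case True
    have "k - 0 + 1 + (if t k \<ge> 2 then 1 else 0) \<le> (\<Sum>j=0..k. t j)"
      by (rule fwd) (use True X in auto)
    then show ?thesis using True by simp
  next
    case False
    then have t0: "t 0 = 0" by simp
    have t1: "t 1 \<ge> 1" using X[of 0] k t0 by (cases "t 1 = 0") auto
    have "k - 1 + 1 + (if t k \<ge> 2 then 1 else 0) \<le> (\<Sum>j=1..k. t j)"
      by (rule fwd) (use t1 X k in auto)
    moreover have "(\<Sum>j=0..k. t j) = t 0 + (\<Sum>j=Suc 0..k. t j)"
      by (simp add: sum.atLeast_Suc_atMost)
    ultimately show ?thesis using False k t0 by simp
  qed
  define y where "y j = (if j = k then max 1 (u k) else u j)" for j
  have sumY: "k - 1 + 1 + (if y 1 \<ge> 2 then 1 else 0) \<le> (\<Sum>j=1..k. y j)"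
  proof (rule bwd)
    show "1 \<le> k" by fact
    show "1 \<le> y k" by (simp add: y_def)
    fix i assume i: "1 \<le> i" "i < k" "y i = 0"
    then have "u i = 0" by (simp add: y_def)
    then have "u (Suc i) \<ge> 2" using Y i by auto
    then show "y (Suc i) \<ge> 2" by (cases "Suc i = k") (auto simp: y_def)
  qed
  have y1: "(y 1 \<ge> 2) = (u 1 \<ge> 2)" by (cases "k = 1") (auto simp: y_def)
  have "(\<Sum>j=1..k. y j) \<le> (\<Sum>j=1..k. u j + (if j = k then (if u k = 0 then 1 else 0) else 0))"
    by (rule sum_mono) (simp add: y_def)
  also have "\<dots> = (\<Sum>j=1..k. u j) + (if u k = 0 then 1 else 0)"
    using k by (simp add: sum.distrib)
  finally have sumU: "k + (if u 1 \<ge> 2 then 1 else 0) \<le> (\<Sum>j=1..k. u j) + (if u k = 0 then 1 else 0)"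
    using sumY y1 k by simp
  have sumU0: "(\<Sum>j=0..k. u j) = u 0 + (\<Sum>j=Suc 0..k. u j)"
    by (simp add: sum.atLeast_Suc_atMost)
  define Bl where "Bl j = S \<inter> (TB j \<union> UB j)" for j
  have cBl: "card (Bl j) = t j + u j" for j
  proof -
    have "Bl j = (S \<inter> TB j) \<union> (S \<inter> UB j)" by (auto simp: Bl_def)
    moreover have "(S \<inter> TB j) \<inter> (S \<inter> UB j) = {}" by (auto simp: TB_def UB_def)
    ultimately show ?thesis unfolding t_def u_def using ft by (simp add: card_Un_disjoint)
  qed
  have "card (\<Union>j\<in>{0..k}. Bl j) = (\<Sum>j\<in>{0..k}. card (Bl j))"
    by (rule card_UN_disjoint) (auto simp: Bl_def TB_def UB_def ft split: if_splits)
  moreover have "card (\<Union>j\<in>{0..k}. Bl j) \<le> card S"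
    by (rule card_mono[OF fS]) (auto simp: Bl_def)
  ultimately have cS: "(\<Sum>j=0..k. t j) + (\<Sum>j=0..k. u j) \<le> card S"
    by (simp add: cBl sum.distrib)
  have e0: "t 0 = card (S \<inter> {Vs 1, Vs 3})" "u 0 = card (S \<inter> {Vs 2})" "u 1 = card (S \<inter> {A 1, C 1})"
    by (simp_all add: t_def u_def TB_def UB_def)
  have "u k = 0 \<Longrightarrow> t k \<ge> 2" using Z by blast
  then show ?thesis using cS sumU sumU0 sumT unfolding e0[symmetric]
    by (auto split: if_splits)
qed


lemma F_verts_eq: "1 \<le> k \<Longrightarrow> F_verts k = A ` {1..k} \<union> B ` {1..k} \<union> C ` {1..k} \<union> D ` {1..k} \<union> {Vs 1, Vs 2, Vs 3}"
  by (auto simp: F_verts_def)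

lemma card_F: "card (F_verts k) = 4 * k + 3"
proof (cases "k = 0")
  case True then show ?thesis by (simp add: F_verts_def)
next
  case False
  then have k: "1 \<le> k" by simp
  have i: "inj_on f {1..k}" if "\<And>a b. f a = f b \<Longrightarrow> a = b" for f :: "nat \<Rightarrow> vtx"
    using that by (auto simp: inj_on_def)
  have c: "card (A ` {1..k}) = k" "card (B ` {1..k}) = k" "card (C ` {1..k}) = k" "card (D ` {1..k}) = k"
    by (simp_all add: card_image inj_on_def)
  show ?thesis unfolding F_verts_eq[OF k]
    by (subst card_Un_disjoint, auto simp: c[simplified])+
qed

lemma cover:
  assumes k: "1 \<le> k"
    and hA: "\<And>i. 1 \<le> i \<Longrightarrow> i \<le> k \<Longrightarrow> \<exists>u\<in>S. F_adj k (A i) u"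
    and hB: "\<And>i. 1 \<le> i \<Longrightarrow> i \<le> k \<Longrightarrow> \<exists>u\<in>S. F_adj k (B i) u"
    and hC: "\<And>i. 1 \<le> i \<Longrightarrow> i \<le> k \<Longrightarrow> \<exists>u\<in>S. F_adj k (C i) u"
    and hD: "\<And>i. 1 \<le> i \<Longrightarrow> i \<le> k \<Longrightarrow> \<exists>u\<in>S. F_adj k (D i) u"
    and h1: "Vs 1 \<notin> W \<Longrightarrow> \<exists>u\<in>S. F_adj k (Vs 1) u"
    and h2: "Vs 2 \<notin> W \<Longrightarrow> \<exists>u\<in>S. F_adj k (Vs 2) u"
    and h3: "Vs 3 \<notin> W \<Longrightarrow> \<exists>u\<in>S. F_adj k (Vs 3) u"
  shows "\<forall>x\<in>F_verts k - W. \<exists>u\<in>S. F_adj k x u"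
proof
  fix x assume "x \<in> F_verts k - W"
  then show "\<exists>u\<in>S. F_adj k x u"
    unfolding F_verts_eq[OF k] using hA hB hC hD h1 h2 h3 by auto
qed

lemma gamma_t_eq:
  assumes "is_TDS V E S0" "card S0 = m" "\<And>S. is_TDS V E S \<Longrightarrow> m \<le> card S"
  shows "gamma_t V E = m"
  unfolding gamma_t_def
  by (rule Least_equality) (use assms in auto)

lemma gamma_ta_eq:
  assumes "is_ATDS V E v S0" "card S0 = m" "\<And>S. is_ATDS V E v S \<Longrightarrow> m \<le> card S"
  shows "gamma_ta V E v = m"
  unfolding gamma_ta_def
  by (rule Least_equality) (use assms in auto)

lemma adjpos:
  assumes "1 \<le> i" "i \<le> k"
  shows "F_adj k (A i) (B i)" "F_adj k (B i) (A i)" "F_adj k (A i) (D i)" "F_adj k (D i) (A i)"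
    "F_adj k (B i) (C i)" "F_adj k (C i) (B i)" "F_adj k (C i) (D i)" "F_adj k (D i) (C i)"
  using assms by (auto simp: F_adj_def F_edges_def G_edges_def)

lemma adjposV: "1 \<le> k \<Longrightarrow> F_adj k (Vs 1) (Vs 2) \<and> F_adj k (Vs 2) (Vs 1) \<and> F_adj k (Vs 3) (Vs 2)
   \<and> F_adj k (Vs 2) (Vs 3) \<and> F_adj k (Vs 1) (A 1) \<and> F_adj k (Vs 3) (C 1)"
  by (auto simp: F_adj_def F_edges_def G_edges_def)

lemma card2:
  assumes "\<And>a b. f a = f b \<Longrightarrow> a = b" "\<And>a b. g a = g b \<Longrightarrow> a = b" "\<And>a b. f a \<noteq> g b"
    "\<And>a. f a \<notin> X" "\<And>a. g a \<notin> X" "finite X"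
  shows "card (X \<union> (f ` {1..k} \<union> g ` {1..k})) = card X + 2 * k"
proof -
  have i: "inj_on h {1..k}" if "\<And>a b. h a = h b \<Longrightarrow> a = b" for h :: "nat \<Rightarrow> 'b"
    using that by (auto simp: inj_on_def)
  have c: "card (f ` {1..k}) = k" "card (g ` {1..k}) = k"
    using assms(1,2) by (simp_all add: card_image inj_on_def)
  have "card (f ` {1..k} \<union> g ` {1..k}) = 2 * k"
    using assms by (subst card_Un_disjoint) (auto simp: c[simplified])
  moreover have "card (X \<union> (f ` {1..k} \<union> g ` {1..k})) = card X + card (f ` {1..k} \<union> g ` {1..k})"
    using assms by (intro card_Un_disjoint) auto
  ultimately show ?thesis by simp
qed

lemma del_TDS:
  assumes "S \<subseteq> V - {w}" "\<forall>x\<in>V - {w}. \<exists>u\<in>S. E x u"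
  shows "is_TDS (V - {w}) (del_vertex_adj V E w) S"
  using assms unfolding is_TDS_def del_vertex_adj_def by blast


lemma card_ge1: "finite S \<Longrightarrow> x \<in> S \<Longrightarrow> x \<in> X \<Longrightarrow> 1 \<le> card (S \<inter> X)"
proof -
  assume "finite S" "x \<in> S" "x \<in> X"
  then have "finite (S \<inter> X)" "S \<inter> X \<noteq> {}" by auto
  then show ?thesis using card_gt_0_iff[of "S \<inter> X"] by linarith
qed

lemma card_pair: "x \<in> S \<Longrightarrow> y \<in> S \<Longrightarrow> x \<noteq> y \<Longrightarrow> card (S \<inter> {x,y}) = 2"
proof -
  assume "x \<in> S" "y \<in> S" "x \<noteq> y"
  then have "S \<inter> {x,y} = {x,y}" by auto
  then show ?thesis using \<open>x \<noteq> y\<close> by simp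
qed


lemma partA:
  assumes k: "1 \<le> k"
  shows "gamma_t (F_verts k) (F_adj k) = 2 * k + 2"
proof (rule gamma_t_eq)
  let ?S = "{Vs 1, Vs 2} \<union> (A ` {1..k} \<union> B ` {1..k})"
  show "card ?S = 2 * k + 2" by (subst card2) auto
  show "is_TDS (F_verts k) (F_adj k) ?S"
    unfolding is_TDS_def
  proof
    show "?S \<subseteq> F_verts k" using k by (auto simp: F_verts_eq)
    have "\<forall>x\<in>F_verts k - {}. \<exists>u\<in>?S. F_adj k x u"
    apply (rule cover[OF k, where W="{}"])
    subgoal for i by (rule bexI[of _ "B i"]) (auto simp: adjpos)
    subgoal for i by (rule bexI[of _ "A i"]) (auto simp: adjpos)
    subgoal for i by (rule bexI[of _ "B i"]) (auto simp: adjpos)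
    subgoal for i by (rule bexI[of _ "A i"]) (auto simp: adjpos)
    subgoal using adjposV[OF k] k by (auto intro: bexI[of _ "Vs 2"])
    subgoal using adjposV[OF k] k by (auto intro: bexI[of _ "Vs 1"])
    subgoal using adjposV[OF k] k by (auto intro: bexI[of _ "Vs 2"])
    done
    then show "\<forall>x\<in>F_verts k. \<exists>u\<in>?S. F_adj k x u" by simp
  qed
next
  fix S assume S: "is_TDS (F_verts k) (F_adj k) S"
  then have SV: "S \<subseteq> F_verts k" and D: "\<forall>x\<in>F_verts k. \<exists>u\<in>S. F_adj k x u"
    by (auto simp: is_TDS_def)
  have fS: "finite S" using SV finite_F finite_subset by blast
  have c: "2*k + (if card (S \<inter> {Vs 1, Vs 3}) \<ge> 1 then 1 else 0)
     + (if card (S \<inter> {A 1, C 1}) \<ge> 2 then 1 else 0) + card (S \<inter> {Vs 2}) \<le> card S"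
    by (rule core[OF k SV]) (use D in auto)
  obtain y2 where y2: "y2 \<in> S" "F_adj k (Vs 2) y2" using D memV_F[OF k] by blast
  then have "y2 = Vs 1 \<or> y2 = Vs 3" using adjV2[OF k] by auto
  then have t0: "card (S \<inter> {Vs 1, Vs 3}) \<ge> 1" using card_ge1[OF fS y2(1)] by auto
  obtain y1 where y1: "y1 \<in> S" "F_adj k (Vs 1) y1" using D memV_F[OF k] by blast
  then have y1': "y1 = A 1 \<or> y1 = Vs 2" using adjV1[OF k] by auto
  obtain y3 where y3: "y3 \<in> S" "F_adj k (Vs 3) y3" using D memV_F[OF k] by blast
  then have y3': "y3 = C 1 \<or> y3 = Vs 2" using adjV3[OF k] by auto
  show "2 * k + 2 \<le> card S"
  proof (cases "Vs 2 \<in> S")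
    case True
    then have "card (S \<inter> {Vs 2}) \<ge> 1" using card_ge1[OF fS] by auto
    then show ?thesis using c t0 by (auto split: if_splits)
  next
    case False
    then have "A 1 \<in> S" "C 1 \<in> S" using y1 y1' y3 y3' by auto
    then have "card (S \<inter> {A 1, C 1}) = 2" by (rule card_pair) simp
    then show ?thesis using c t0 by (auto split: if_splits)
  qed
qed

lemma partB2:
  assumes k: "1 \<le> k"
  shows "gamma_t (F_verts k - {Vs 2}) (del_vertex_adj (F_verts k) (F_adj k) (Vs 2)) = 2 * k + 1"
proof (rule gamma_t_eq)
  let ?S = "{C 1} \<union> (A ` {1..k} \<union> B ` {1..k})"
  show "card ?S = 2 * k + 1" by (subst card2) auto
  show "is_TDS (F_verts k - {Vs 2}) (del_vertex_adj (F_verts k) (F_adj k) (Vs 2)) ?S"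
  proof (rule del_TDS)
    show "?S \<subseteq> F_verts k - {Vs 2}" using k by (auto simp: F_verts_eq)
    show "\<forall>x\<in>F_verts k - {Vs 2}. \<exists>u\<in>?S. F_adj k x u"
    apply (rule cover[OF k, where W="{Vs 2}"])
    subgoal for i by (rule bexI[of _ "B i"]) (auto simp: adjpos)
    subgoal for i by (rule bexI[of _ "A i"]) (auto simp: adjpos)
    subgoal for i by (rule bexI[of _ "B i"]) (auto simp: adjpos)
    subgoal for i by (rule bexI[of _ "A i"]) (auto simp: adjpos)
    subgoal using adjposV[OF k] k by (auto intro: bexI[of _ "A 1"])
    subgoal by simp
    subgoal using adjposV[OF k] k by (auto intro: bexI[of _ "C 1"])
    done
  qed
next
  fix S assume S: "is_TDS (F_verts k - {Vs 2}) (del_vertex_adj (F_verts k) (F_adj k) (Vs 2)) S"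
  then have SV': "S \<subseteq> F_verts k - {Vs 2}" and D: "\<forall>x\<in>F_verts k - {Vs 2}. \<exists>u\<in>S. F_adj k x u"
    by (auto simp: is_TDS_def del_vertex_adj_def)
  then have SV: "S \<subseteq> F_verts k" by auto
  have nw: "Vs 2 \<notin> S" using SV' by auto
  have fS: "finite S" using SV finite_F finite_subset by blast
  have c: "2*k + (if card (S \<inter> {Vs 1, Vs 3}) \<ge> 1 then 1 else 0)
     + (if card (S \<inter> {A 1, C 1}) \<ge> 2 then 1 else 0) + card (S \<inter> {Vs 2}) \<le> card S"
    by (rule core[OF k SV]) (use D in auto)
  obtain y1 where y1: "y1 \<in> S" "F_adj k (Vs 1) y1" using D memV_F[OF k] by force
  then have "y1 = A 1" using adjV1[OF k] nw by auto
  obtain y3 where y3: "y3 \<in> S" "F_adj k (Vs 3) y3" using D memV_F[OF k] by force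
  then have "y3 = C 1" using adjV3[OF k] nw by auto
  have "card (S \<inter> {A 1, C 1}) = 2" by (rule card_pair) (use y1 y3 \<open>y1 = A 1\<close> \<open>y3 = C 1\<close> in auto)
  then show "2 * k + 1 \<le> card S" using c by (auto split: if_splits)
qed

lemma partB1:
  assumes k: "1 \<le> k"
  shows "gamma_t (F_verts k - {Vs 1}) (del_vertex_adj (F_verts k) (F_adj k) (Vs 1)) = 2 * k + 1"
proof (rule gamma_t_eq)
  let ?S = "{Vs 3} \<union> (B ` {1..k} \<union> C ` {1..k})"
  show "card ?S = 2 * k + 1" by (subst card2) auto
  show "is_TDS (F_verts k - {Vs 1}) (del_vertex_adj (F_verts k) (F_adj k) (Vs 1)) ?S"
  proof (rule del_TDS)
    show "?S \<subseteq> F_verts k - {Vs 1}" using k by (auto simp: F_verts_eq)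
    show "\<forall>x\<in>F_verts k - {Vs 1}. \<exists>u\<in>?S. F_adj k x u"
    apply (rule cover[OF k, where W="{Vs 1}"])
    subgoal for i by (rule bexI[of _ "B i"]) (auto simp: adjpos)
    subgoal for i by (rule bexI[of _ "C i"]) (auto simp: adjpos)
    subgoal for i by (rule bexI[of _ "B i"]) (auto simp: adjpos)
    subgoal for i by (rule bexI[of _ "C i"]) (auto simp: adjpos)
    subgoal by simp
    subgoal using adjposV[OF k] k by (auto intro: bexI[of _ "Vs 3"])
    subgoal using adjposV[OF k] k by (auto intro: bexI[of _ "C 1"])
    done
  qed
next
  fix S assume S: "is_TDS (F_verts k - {Vs 1}) (del_vertex_adj (F_verts k) (F_adj k) (Vs 1)) S"
  then have SV': "S \<subseteq> F_verts k - {Vs 1}" and D: "\<forall>x\<in>F_verts k - {Vs 1}. \<exists>u\<in>S. F_adj k x u"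
    by (auto simp: is_TDS_def del_vertex_adj_def)
  then have SV: "S \<subseteq> F_verts k" by auto
  have nw: "Vs 1 \<notin> S" using SV' by auto
  have fS: "finite S" using SV finite_F finite_subset by blast
  have c: "2*k + (if card (S \<inter> {Vs 1, Vs 3}) \<ge> 1 then 1 else 0)
     + (if card (S \<inter> {A 1, C 1}) \<ge> 2 then 1 else 0) + card (S \<inter> {Vs 2}) \<le> card S"
    by (rule core[OF k SV]) (use D in auto)
  obtain y2 where y2: "y2 \<in> S" "F_adj k (Vs 2) y2" using D memV_F[OF k] by force
  then have "y2 = Vs 3" using adjV2[OF k] nw by auto
  then have "card (S \<inter> {Vs 1, Vs 3}) \<ge> 1" using card_ge1[OF fS y2(1)] by auto
  then show "2 * k + 1 \<le> card S" using c by (auto split: if_splits)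
qed

lemma partB3:
  assumes k: "1 \<le> k"
  shows "gamma_t (F_verts k - {Vs 3}) (del_vertex_adj (F_verts k) (F_adj k) (Vs 3)) = 2 * k + 1"
proof (rule gamma_t_eq)
  let ?S = "{Vs 1} \<union> (A ` {1..k} \<union> D ` {1..k})"
  show "card ?S = 2 * k + 1" by (subst card2) auto
  show "is_TDS (F_verts k - {Vs 3}) (del_vertex_adj (F_verts k) (F_adj k) (Vs 3)) ?S"
  proof (rule del_TDS)
    show "?S \<subseteq> F_verts k - {Vs 3}" using k by (auto simp: F_verts_eq)
    show "\<forall>x\<in>F_verts k - {Vs 3}. \<exists>u\<in>?S. F_adj k x u"
    apply (rule cover[OF k, where W="{Vs 3}"])
    subgoal for i by (rule bexI[of _ "D i"]) (auto simp: adjpos)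
    subgoal for i by (rule bexI[of _ "A i"]) (auto simp: adjpos)
    subgoal for i by (rule bexI[of _ "D i"]) (auto simp: adjpos)
    subgoal for i by (rule bexI[of _ "A i"]) (auto simp: adjpos)
    subgoal using adjposV[OF k] k by (auto intro: bexI[of _ "A 1"])
    subgoal using adjposV[OF k] k by (auto intro: bexI[of _ "Vs 1"])
    subgoal by simp
    done
  qed
next
  fix S assume S: "is_TDS (F_verts k - {Vs 3}) (del_vertex_adj (F_verts k) (F_adj k) (Vs 3)) S"
  then have SV': "S \<subseteq> F_verts k - {Vs 3}" and D: "\<forall>x\<in>F_verts k - {Vs 3}. \<exists>u\<in>S. F_adj k x u"
    by (auto simp: is_TDS_def del_vertex_adj_def)
  then have SV: "S \<subseteq> F_verts k" by auto
  have nw: "Vs 3 \<notin> S" using SV' by auto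
  have fS: "finite S" using SV finite_F finite_subset by blast
  have c: "2*k + (if card (S \<inter> {Vs 1, Vs 3}) \<ge> 1 then 1 else 0)
     + (if card (S \<inter> {A 1, C 1}) \<ge> 2 then 1 else 0) + card (S \<inter> {Vs 2}) \<le> card S"
    by (rule core[OF k SV]) (use D in auto)
  obtain y2 where y2: "y2 \<in> S" "F_adj k (Vs 2) y2" using D memV_F[OF k] by force
  then have "y2 = Vs 1" using adjV2[OF k] nw by auto
  then have "card (S \<inter> {Vs 1, Vs 3}) \<ge> 1" using card_ge1[OF fS y2(1)] by auto
  then show "2 * k + 1 \<le> card S" using c by (auto split: if_splits)
qed

lemma partC2:
  assumes k: "1 \<le> k"
  shows "gamma_ta (F_verts k) (F_adj k) (Vs 2) = 2 * k + 1"
proof (rule gamma_ta_eq)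
  let ?S = "{Vs 2} \<union> (A ` {1..k} \<union> B ` {1..k})"
  show "card ?S = 2 * k + 1" by (subst card2) auto
  have cov: "\<forall>x\<in>F_verts k - {Vs 2}. \<exists>u\<in>?S. F_adj k x u"
    apply (rule cover[OF k, where W="{Vs 2}"])
    subgoal for i by (rule bexI[of _ "B i"]) (auto simp: adjpos)
    subgoal for i by (rule bexI[of _ "A i"]) (auto simp: adjpos)
    subgoal for i by (rule bexI[of _ "B i"]) (auto simp: adjpos)
    subgoal for i by (rule bexI[of _ "A i"]) (auto simp: adjpos)
    subgoal using adjposV[OF k] k by (auto intro: bexI[of _ "Vs 2"])
    subgoal by simp
    subgoal using adjposV[OF k] k by (auto intro: bexI[of _ "Vs 2"])
    done
  show "is_ATDS (F_verts k) (F_adj k) (Vs 2) ?S"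
    unfolding is_ATDS_def using cov k adjV2[OF k] by (auto simp: F_verts_eq)
next
  fix S assume S: "is_ATDS (F_verts k) (F_adj k) (Vs 2) S"
  then have SV: "S \<subseteq> F_verts k" and D: "\<forall>x\<in>F_verts k - {Vs 2}. \<exists>u\<in>S. F_adj k x u"
    and wS: "Vs 2 \<in> S"
    by (auto simp: is_ATDS_def)
  have fS: "finite S" using SV finite_F finite_subset by blast
  have c: "2*k + (if card (S \<inter> {Vs 1, Vs 3}) \<ge> 1 then 1 else 0)
     + (if card (S \<inter> {A 1, C 1}) \<ge> 2 then 1 else 0) + card (S \<inter> {Vs 2}) \<le> card S"
    by (rule core[OF k SV]) (use D in auto)
  have "card (S \<inter> {Vs 2}) \<ge> 1" using card_ge1[OF fS wS] by auto
  then show "2 * k + 1 \<le> card S" using c by (auto split: if_splits)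
qed

lemma partC1:
  assumes k: "1 \<le> k"
  shows "gamma_ta (F_verts k) (F_adj k) (Vs 1) = 2 * k + 1"
proof (rule gamma_ta_eq)
  let ?S = "{Vs 1} \<union> (B ` {1..k} \<union> C ` {1..k})"
  show "card ?S = 2 * k + 1" by (subst card2) auto
  have cov: "\<forall>x\<in>F_verts k - {Vs 1}. \<exists>u\<in>?S. F_adj k x u"
    apply (rule cover[OF k, where W="{Vs 1}"])
    subgoal for i by (rule bexI[of _ "B i"]) (auto simp: adjpos)
    subgoal for i by (rule bexI[of _ "C i"]) (auto simp: adjpos)
    subgoal for i by (rule bexI[of _ "B i"]) (auto simp: adjpos)
    subgoal for i by (rule bexI[of _ "C i"]) (auto simp: adjpos)
    subgoal by simp
    subgoal using adjposV[OF k] k by (auto intro: bexI[of _ "Vs 1"])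
    subgoal using adjposV[OF k] k by (auto intro: bexI[of _ "C 1"])
    done
  show "is_ATDS (F_verts k) (F_adj k) (Vs 1) ?S"
    unfolding is_ATDS_def using cov k adjV1[OF k] by (auto simp: F_verts_eq)
next
  fix S assume S: "is_ATDS (F_verts k) (F_adj k) (Vs 1) S"
  then have SV: "S \<subseteq> F_verts k" and D: "\<forall>x\<in>F_verts k - {Vs 1}. \<exists>u\<in>S. F_adj k x u"
    and wS: "Vs 1 \<in> S"
    by (auto simp: is_ATDS_def)
  have fS: "finite S" using SV finite_F finite_subset by blast
  have c: "2*k + (if card (S \<inter> {Vs 1, Vs 3}) \<ge> 1 then 1 else 0)
     + (if card (S \<inter> {A 1, C 1}) \<ge> 2 then 1 else 0) + card (S \<inter> {Vs 2}) \<le> card S"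
    by (rule core[OF k SV]) (use D in auto)
  have "card (S \<inter> {Vs 1, Vs 3}) \<ge> 1" using card_ge1[OF fS wS] by auto
  then show "2 * k + 1 \<le> card S" using c by (auto split: if_splits)
qed

lemma partC3:
  assumes k: "1 \<le> k"
  shows "gamma_ta (F_verts k) (F_adj k) (Vs 3) = 2 * k + 1"
proof (rule gamma_ta_eq)
  let ?S = "{Vs 3} \<union> (A ` {1..k} \<union> D ` {1..k})"
  show "card ?S = 2 * k + 1" by (subst card2) auto
  have cov: "\<forall>x\<in>F_verts k - {Vs 3}. \<exists>u\<in>?S. F_adj k x u"
    apply (rule cover[OF k, where W="{Vs 3}"])
    subgoal for i by (rule bexI[of _ "D i"]) (auto simp: adjpos)
    subgoal for i by (rule bexI[of _ "A i"]) (auto simp: adjpos)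
    subgoal for i by (rule bexI[of _ "D i"]) (auto simp: adjpos)
    subgoal for i by (rule bexI[of _ "A i"]) (auto simp: adjpos)
    subgoal using adjposV[OF k] k by (auto intro: bexI[of _ "A 1"])
    subgoal using adjposV[OF k] k by (auto intro: bexI[of _ "Vs 3"])
    subgoal by simp
    done
  show "is_ATDS (F_verts k) (F_adj k) (Vs 3) ?S"
    unfolding is_ATDS_def using cov k adjV3[OF k] by (auto simp: F_verts_eq)
next
  fix S assume S: "is_ATDS (F_verts k) (F_adj k) (Vs 3) S"
  then have SV: "S \<subseteq> F_verts k" and D: "\<forall>x\<in>F_verts k - {Vs 3}. \<exists>u\<in>S. F_adj k x u"
    and wS: "Vs 3 \<in> S"
    by (auto simp: is_ATDS_def)
  have fS: "finite S" using SV finite_F finite_subset by blast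
  have c: "2*k + (if card (S \<inter> {Vs 1, Vs 3}) \<ge> 1 then 1 else 0)
     + (if card (S \<inter> {A 1, C 1}) \<ge> 2 then 1 else 0) + card (S \<inter> {Vs 2}) \<le> card S"
    by (rule core[OF k SV]) (use D in auto)
  have "card (S \<inter> {Vs 1, Vs 3}) \<ge> 1" using card_ge1[OF fS wS] by auto
  then show "2 * k + 1 \<le> card S" using c by (auto split: if_splits)
qed


lemma part0: "gamma_t (F_verts 0) (F_adj 0) = 2"
proof (rule gamma_t_eq)
  show "is_TDS (F_verts 0) (F_adj 0) {Vs 1, Vs 2}"
    by (auto simp: is_TDS_def F_verts_def F_adj_def F_edges_def)
  show "card {Vs 1, Vs 2} = 2" by simp
next
  fix S assume S: "is_TDS (F_verts 0) (F_adj 0) S"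
  then have SV: "S \<subseteq> F_verts 0" and D: "\<forall>x\<in>F_verts 0. \<exists>u\<in>S. F_adj 0 x u"
    by (auto simp: is_TDS_def)
  have fS: "finite S" using SV finite_F finite_subset by blast
  obtain u where u: "u \<in> S" "F_adj 0 (Vs 1) u" using D by (auto simp: F_verts_def)
  then have "u \<in> F_verts 0" using SV by auto
  then obtain u' where u': "u' \<in> S" "F_adj 0 u u'" using D by auto
  have "u \<noteq> u'" using u' by (auto simp: F_adj_def F_edges_def)
  then have "card {u, u'} = 2" by simp
  moreover have "card {u, u'} \<le> card S" using u u' fS by (intro card_mono) auto
  ultimately show "2 \<le> card S" by simp
qed

theorem mainTheorem3:
  fixes k :: nat
  shows "card (F_verts k) = 4 * k + 3
    \<and> real (gamma_t (F_verts k) (F_adj k)) = (real (card (F_verts k)) + 1) / 2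
    \<and> (k \<ge> 1 \<longrightarrow> (\<forall>w \<in> {Vs 1, Vs 2, Vs 3}.
          real (gamma_t (F_verts k - {w}) (del_vertex_adj (F_verts k) (F_adj k) w))
            = (real (card (F_verts k)) - 1) / 2
        \<and> real (gamma_ta (F_verts k) (F_adj k) w) = (real (card (F_verts k)) - 1) / 2))"
proof (cases "k = 0")
  case True
  then show ?thesis by (simp add: card_F part0)
next
  case False
  then have k: "1 \<le> k" by simp
  show ?thesis using k
    using partA[OF k] partB1[OF k, simplified] partB2[OF k] partB3[OF k] partC1[OF k, simplified] partC2[OF k] partC3[OF k]
    by (simp add: card_F; simp add: field_simps)
qed

end
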